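(* Let $M$ be a finite monoid. (i) Every filtered left $M$-set $A$ is cyclic, i.e. there is $c\in A$ with $A=Mc$; in particular $|A|\le |M|$. (ii) The set $\mathsf F_M$ of isomorphism classes of filtered left $M$-sets (equivalently, of points of the topos of right $M$-sets) is finite.
   Context: A left $M$-set $A$ is filtered if the functor $(-)\otimes_M A$ from right $M$-sets to sets preserves finite limits; equivalently: (F1) $A\neq\emptyset$; (F2) if $m_1,m_2\in M$, $a\in A$ and $m_1a=m_2a$, then there are $m\in M$, $\tilde a\in A$ with $m\tilde a=a$ and $m_1m=m_2m$; (F3) for $a_1,a_2\in A$ there are $m_1,m_2\in M$, $a\in A$ with $m_1a=a_1$, $m_2a=a_2$. *)

theory Defs
  imports Main
begin

definition left_mset :: "'a set \<Rightarrow> ('m::monoid_mult \<Rightarrow> 'a \<Rightarrow> 'a) \<Rightarrow> bool" where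
  "left_mset A act \<longleftrightarrow>
     (\<forall>m. \<forall>a\<in>A. act m a \<in> A) \<and>
     (\<forall>a\<in>A. act 1 a = a) \<and>
     (\<forall>m n. \<forall>a\<in>A. act (m * n) a = act m (act n a))"

definition filtered_mset :: "'a set \<Rightarrow> ('m::monoid_mult \<Rightarrow> 'a \<Rightarrow> 'a) \<Rightarrow> bool" where
  "filtered_mset A act \<longleftrightarrow>
     left_mset A act \<and>
     A \<noteq> {} \<and>
     (\<forall>m1 m2. \<forall>a\<in>A. act m1 a = act m2 a \<longrightarrow>
        (\<exists>m. \<exists>a'\<in>A. act m a' = a \<and> m1 * m = m2 * m)) \<and>
     (\<forall>a1\<in>A. \<forall>a2\<in>A. \<exists>m1 m2. \<exists>a\<in>A. act m1 a = a1 \<and> act m2 a = a2)"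

definition mset_iso :: "'a set \<Rightarrow> ('m::monoid_mult \<Rightarrow> 'a \<Rightarrow> 'a) \<Rightarrow> 'b set \<Rightarrow> ('m \<Rightarrow> 'b \<Rightarrow> 'b) \<Rightarrow> bool" where
  "mset_iso A act B act' \<longleftrightarrow>
     (\<exists>f. bij_betw f A B \<and> (\<forall>m. \<forall>a\<in>A. f (act m a) = act' m (f a)))"

end

theory Submission
  imports Defs
begin

lemma cyclic:
  fixes A :: "'a set" and act :: "'m::monoid_mult \<Rightarrow> 'a \<Rightarrow> 'a"
  assumes finM: "finite (UNIV :: 'm set)" and F: "filtered_mset A act"
  shows "\<exists>c\<in>A. A = (\<lambda>m. act m c) ` UNIV"
proof -
  have L: "left_mset A act" and ne: "A \<noteq> {}"
    and F3: "\<forall>a1\<in>A. \<forall>a2\<in>A. \<exists>m1 m2. \<exists>a\<in>A. act m1 a = a1 \<and> act m2 a = a2"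
    using F unfolding filtered_mset_def by auto
  have cl: "\<And>m a. a \<in> A \<Longrightarrow> act m a \<in> A" and one: "\<And>a. a\<in>A \<Longrightarrow> act 1 a = a"
    and ass: "\<And>m n a. a\<in>A \<Longrightarrow> act (m*n) a = act m (act n a)"
    using L unfolding left_mset_def by auto
  define S where "S = (\<lambda>c. card ((\<lambda>m. act m c) ` (UNIV::'m set))) ` A"
  have finS: "finite S"
  proof -
    have "S \<subseteq> {..card (UNIV::'m set)}" unfolding S_def
      using card_image_le[OF finM] by auto
    thus ?thesis using finite_subset by blast
  qed
  have "S \<noteq> {}" using ne unfolding S_def by auto
  then have "Max S \<in> S" using finS by simp
  then obtain c where c: "c \<in> A" and cmax: "card ((\<lambda>m. act m c) ` UNIV) = Max S"
    unfolding S_def by auto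
  have "A \<subseteq> (\<lambda>m. act m c) ` UNIV"
  proof
    fix a assume a: "a \<in> A"
    obtain m1 m2 d where d: "d \<in> A" "act m1 d = c" "act m2 d = a" using F3 c a by blast
    have sub: "(\<lambda>m. act m c) ` UNIV \<subseteq> (\<lambda>m. act m d) ` UNIV"
    proof
      fix x assume "x \<in> (\<lambda>m. act m c) ` UNIV"
      then obtain m where "x = act m c" by auto
      hence "x = act (m*m1) d" using ass[OF d(1)] d(2) by simp
      thus "x \<in> (\<lambda>m. act m d) ` UNIV" by auto
    qed
    have fd: "finite ((\<lambda>m. act m d) ` UNIV)" using finM by simp
    have "card ((\<lambda>m. act m d) ` UNIV) \<in> S" using d(1) unfolding S_def by auto
    hence "card ((\<lambda>m. act m d) ` UNIV) \<le> card ((\<lambda>m. act m c) ` UNIV)" using cmax finS by simp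
    hence "(\<lambda>m. act m c) ` UNIV = (\<lambda>m. act m d) ` UNIV" using card_seteq[OF fd sub] by simp
    thus "a \<in> (\<lambda>m. act m c) ` UNIV" using d(3) by auto
  qed
  moreover have "(\<lambda>m. act m c) ` UNIV \<subseteq> A" using cl c by auto
  ultimately show ?thesis using c by blast
qed

lemma transport:
  fixes A :: "'a set" and act :: "'m::monoid_mult \<Rightarrow> 'a \<Rightarrow> 'a"
    and B :: "'b set" and bct :: "'m \<Rightarrow> 'b \<Rightarrow> 'b"
  assumes F: "filtered_mset A act" and bij: "bij_betw f A B"
    and eq: "\<forall>m. \<forall>a\<in>A. f (act m a) = bct m (f a)"
  shows "filtered_mset B bct"
proof -
  have L: "left_mset A act" and ne: "A \<noteq> {}"
    and F2: "\<forall>m1 m2. \<forall>a\<in>A. act m1 a = act m2 a \<longrightarrow>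
        (\<exists>m. \<exists>a'\<in>A. act m a' = a \<and> m1 * m = m2 * m)"
    and F3: "\<forall>a1\<in>A. \<forall>a2\<in>A. \<exists>m1 m2. \<exists>a\<in>A. act m1 a = a1 \<and> act m2 a = a2"
    using F unfolding filtered_mset_def by auto
  have cl: "\<And>m a. a \<in> A \<Longrightarrow> act m a \<in> A" and one: "\<And>a. a\<in>A \<Longrightarrow> act 1 a = a"
    and ass: "\<And>m n a. a\<in>A \<Longrightarrow> act (m*n) a = act m (act n a)"
    using L unfolding left_mset_def by auto
  have BA: "B = f ` A" and inj: "inj_on f A" using bij by (auto simp: bij_betw_def)
  have "left_mset B bct"
    unfolding left_mset_def BA
  proof (intro conjI ballI allI)
    fix m x assume "x \<in> f ` A" then obtain a where a: "a\<in>A" "x = f a" by auto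
    have "bct m x = f (act m a)" using a eq by simp
    thus "bct m x \<in> f ` A" using a(1) cl by blast
  next
    fix x assume "x \<in> f ` A" then obtain a where a: "a\<in>A" "x = f a" by auto
    have "bct 1 x = f (act 1 a)" using a eq by simp
    thus "bct 1 x = x" using a one by simp
  next
    fix m n x assume "x \<in> f ` A" then obtain a where a: "a\<in>A" "x = f a" by auto
    have "bct (m*n) x = f (act (m*n) a)" using a eq by simp
    also have "\<dots> = f (act m (act n a))" using a ass by simp
    also have "\<dots> = bct m (f (act n a))" using a(1) cl eq by blast
    also have "\<dots> = bct m (bct n x)" using a eq by simp
    finally show "bct (m*n) x = bct m (bct n x)" .
  qed
  moreover have "B \<noteq> {}" using ne BA by auto
  moreover have "\<forall>m1 m2. \<forall>x\<in>B. bct m1 x = bct m2 x \<longrightarrow>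
        (\<exists>m. \<exists>x'\<in>B. bct m x' = x \<and> m1 * m = m2 * m)"
  proof (intro allI ballI impI)
    fix m1 m2 x assume x: "x \<in> B" and e: "bct m1 x = bct m2 x"
    then obtain a where a: "a\<in>A" "x = f a" using BA by auto
    have "f (act m1 a) = f (act m2 a)" using e a eq by simp
    hence "act m1 a = act m2 a" using inj cl a(1) by (meson inj_onD)
    then obtain m a' where "a'\<in>A" "act m a' = a" "m1*m = m2*m" using F2 a(1) by blast
    hence "bct m (f a') = x" "f a' \<in> B" using a eq BA by auto
    thus "\<exists>m. \<exists>x'\<in>B. bct m x' = x \<and> m1 * m = m2 * m" using \<open>m1*m = m2*m\<close> by blast
  qed
  moreover have "\<forall>x1\<in>B. \<forall>x2\<in>B. \<exists>m1 m2. \<exists>x\<in>B. bct m1 x = x1 \<and> bct m2 x = x2"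
  proof (intro ballI)
    fix x1 x2 assume "x1 \<in> B" "x2 \<in> B"
    then obtain a1 a2 where a: "a1\<in>A" "x1 = f a1" "a2\<in>A" "x2 = f a2" using BA by auto
    then obtain m1 m2 a where "a\<in>A" "act m1 a = a1" "act m2 a = a2" using F3 by blast
    hence "bct m1 (f a) = x1" "bct m2 (f a) = x2" "f a \<in> B" using a eq BA by auto
    thus "\<exists>m1 m2. \<exists>x\<in>B. bct m1 x = x1 \<and> bct m2 x = x2" by blast
  qed
  ultimately show ?thesis unfolding filtered_mset_def by (intro conjI)
qed

definition BR :: "('m::monoid_mult \<times> 'm) set \<Rightarrow> 'm set set" where
  "BR R = range (\<lambda>m. {n. (n, m) \<in> R})"

definition bctR :: "('m::monoid_mult \<times> 'm) set \<Rightarrow> 'm \<Rightarrow> 'm set \<Rightarrow> 'm set" where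
  "bctR R k X = {n. \<exists>m\<in>X. (n, k*m) \<in> R}"

lemma repr:
  fixes A :: "'a set" and act :: "'m::monoid_mult \<Rightarrow> 'a \<Rightarrow> 'a"
  assumes finM: "finite (UNIV :: 'm set)" and F: "filtered_mset A act"
  shows "\<exists>R. filtered_mset (BR R) (bctR R) \<and> mset_iso A act (BR R) (bctR R)"
proof -
  obtain c where c: "c\<in>A" and Ac: "A = (\<lambda>m. act m c) ` UNIV" using cyclic[OF finM F] by blast
  have L: "left_mset A act" using F unfolding filtered_mset_def by auto
  have ass: "\<And>m n a. a\<in>A \<Longrightarrow> act (m*n) a = act m (act n a)"
    using L unfolding left_mset_def by auto
  define R where "R = {(n, m). act n c = act m c}"
  define f where "f a = {n. act n c = a}" for a
  have fcls: "f (act m c) = {n. (n, m) \<in> R}" for m unfolding f_def R_def by auto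
  have bij: "bij_betw f A (BR R)"
    unfolding bij_betw_def
  proof
    show "inj_on f A"
    proof (rule inj_onI)
      fix a b assume "a\<in>A" "b\<in>A" "f a = f b"
      then obtain m where "a = act m c" "m \<in> f a" using Ac unfolding f_def by auto
      thus "a = b" using \<open>f a = f b\<close> unfolding f_def by auto
    qed
    show "f ` A = BR R" unfolding BR_def Ac using fcls by (auto simp: image_image)
  qed
  have eq: "\<forall>m. \<forall>a\<in>A. f (act m a) = bctR R m (f a)"
  proof (intro allI ballI)
    fix k a assume "a \<in> A"
    then obtain m0 where a: "a = act m0 c" using Ac by auto
    show "f (act k a) = bctR R k (f a)"
      unfolding f_def bctR_def R_def using ass[OF c] a by auto
  qed
  have "mset_iso A act (BR R) (bctR R)" unfolding mset_iso_def using bij eq by blast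
  moreover have "filtered_mset (BR R) (bctR R)" using transport[OF F bij eq] .
  ultimately show ?thesis by blast
qed

theorem theorem3p5:
  fixes A :: "'a set" and act :: "'m::monoid_mult \<Rightarrow> 'a \<Rightarrow> 'a"
  assumes finM: "finite (UNIV :: 'm set)"
  shows "(filtered_mset A act \<longrightarrow>
            (\<exists>c\<in>A. A = (\<lambda>m. act m c) ` UNIV) \<and> finite A \<and> card A \<le> card (UNIV :: 'm set))
       \<and> (\<exists>F :: ((('m set) set) \<times> ('m \<Rightarrow> 'm set \<Rightarrow> 'm set)) set.
            finite F \<and> (\<forall>(B, bct)\<in>F. filtered_mset B bct) \<and>
            (\<forall>(A' :: 'a set) (act' :: 'm \<Rightarrow> 'a \<Rightarrow> 'a). filtered_mset A' act' \<longrightarrow>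
               (\<exists>(B, bct)\<in>F. mset_iso A' act' B bct)))"
proof (intro conjI impI)
  assume F: "filtered_mset A act"
  then obtain c where c: "c\<in>A" and Ac: "A = (\<lambda>m. act m c) ` UNIV" using cyclic[OF finM] by blast
  show "\<exists>c\<in>A. A = (\<lambda>m. act m c) ` UNIV" using c Ac by blast
  show "finite A" using Ac finM by simp
  show "card A \<le> card (UNIV :: 'm set)" using Ac card_image_le[OF finM] by simp
next
  define F where "F = (\<lambda>R. (BR R, bctR R)) ` {R :: ('m \<times> 'm) set. filtered_mset (BR R) (bctR R)}"
  have "finite (UNIV :: ('m \<times> 'm) set set)" proof -
    have "finite (UNIV :: ('m \<times> 'm) set)" using finite_cartesian_product[OF finM finM] by simp
    hence "finite (Pow (UNIV :: ('m \<times> 'm) set))" by (simp only: finite_Pow_iff)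
    thus ?thesis by simp
  qed
  hence "finite {R :: ('m \<times> 'm) set. filtered_mset (BR R) (bctR R)}" by (rule finite_subset[OF subset_UNIV])
  hence "finite F" unfolding F_def by (rule finite_imageI)
  moreover have "\<forall>(B, bct)\<in>F. filtered_mset B bct" unfolding F_def by (simp add: image_iff)
  moreover have "\<forall>(A' :: 'a set) (act' :: 'm \<Rightarrow> 'a \<Rightarrow> 'a). filtered_mset A' act' \<longrightarrow>
               (\<exists>(B, bct)\<in>F. mset_iso A' act' B bct)"
  proof (intro allI impI)
    fix A' :: "'a set" and act' :: "'m \<Rightarrow> 'a \<Rightarrow> 'a" assume "filtered_mset A' act'"
    then obtain R where "filtered_mset (BR R) (bctR R)" "mset_iso A' act' (BR R) (bctR R)"
      using repr[OF finM] by blast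
    thus "\<exists>(B, bct)\<in>F. mset_iso A' act' B bct" unfolding F_def by blast
  qed
  ultimately show "\<exists>F :: ((('m set) set) \<times> ('m \<Rightarrow> 'm set \<Rightarrow> 'm set)) set.
            finite F \<and> (\<forall>(B, bct)\<in>F. filtered_mset B bct) \<and>
            (\<forall>(A' :: 'a set) (act' :: 'm \<Rightarrow> 'a \<Rightarrow> 'a). filtered_mset A' act' \<longrightarrow>
               (\<exists>(B, bct)\<in>F. mset_iso A' act' B bct))" by blast
qed

end
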